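(* Consider the centralized caching problem with uncoded prefetching with $N$ files, $K$ users, and local cache size of $M$ files per user, $t=KM/N$, with generalized demands. For every file size $F$, every $\epsilon>0$, and every generalized statistics $\boldsymbol{s}$, $$\min_{\boldsymbol{\mathcal{M}}}R^*_{\epsilon,K}(\boldsymbol{s},\boldsymbol{\mathcal{M}})\ \ge\ \mathrm{Conv}\left(\frac{\binom{K}{t+1}-\binom{K-N_{\mathrm{e}}(\boldsymbol{s})}{t+1}}{\binom{K}{t}}\right)-\left(\frac{1}{F}+N_{\mathrm{e}}^2(\boldsymbol{s})\epsilon\right),$$ where the minimum is over all uncoded prefetchings satisfying the memory constraint and $\mathrm{Conv}(f(t))$ denotes the lower convex envelope of the points $\{(t,f(t)):t\in\{0,1,\dots,K\}\}$, evaluated at $t=KM/N$.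
   Context: Setting: $N$ files of $F$ bits each, all bits i.i.d. Bernoulli$(1/2)$; $K$ users each with $MF$ bits of cache, $M\in[0,N]$. An uncoded prefetching $\boldsymbol{\mathcal{M}}=(\mathcal{M}_1,\dots,\mathcal{M}_K)$: each $\mathcal{M}_k$ is a set of at most $MF$ bit indices and user $k$ stores those bits. A generalized demand is $\boldsymbol{d}=(d_1,\dots,d_K)\in\{0,1,\dots,N\}^K$, where $d_k\neq0$ means user $k$ requests file $W_{d_k}$ and $d_k=0$ means user $k$ makes no request. A rate $R$ is $\epsilon$-achievable for $\boldsymbol{\mathcal{M}},\boldsymbol{d}$ if there are an encoder $X=\psi(W_1,\dots,W_N)\in\{0,1\}^{RF}$ and decoders such that each requesting user $k$ recovers $W_{d_k}$ from $X$ and its cached bits with error probability at most $\epsilon$; $R^*_{\epsilon,K}(\boldsymbol{d},\boldsymbol{\mathcal{M}})$ is the minimum such rate. The statistics of a generalized demand is the length-$N$ array, sorted nonincreasingly, whose $i$-th entry is the number of users requesting the $i$-th most requested file; the generalized type $\mathcal{D}_{\boldsymbol{s}}$ is the set of generalized demands with statistics $\boldsymbol{s}$; $N_{\mathrm{e}}(\boldsymbol{s})$ is the number of distinct requested files. $R^*_{\epsilon,K}(\boldsymbol{s},\boldsymbol{\mathcal{M}})$ is the average of $R^*_{\epsilon,K}(\boldsymbol{d},\boldsymbol{\mathcal{M}})$ over $\boldsymbol{d}\in\mathcal{D}_{\boldsymbol{s}}$. Convention: $\binom{n}{k}=0$ when $k>n$. *)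

theory Defs
  imports Complex_Main
begin

text \<open>Bit indices of the library: (file n, position j) with n in 1..N, j < F.\<close>
definition bit_idx :: "nat \<Rightarrow> nat \<Rightarrow> (nat \<times> nat) set" where
  "bit_idx N F = {1..N} \<times> {0..<F}"

text \<open>Library realizations (all bits outside the index set are fixed to False).
  Since bits are i.i.d. Bernoulli(1/2), the library is uniform over this finite set.\<close>
definition libs :: "nat \<Rightarrow> nat \<Rightarrow> ((nat \<times> nat) \<Rightarrow> bool) set" where
  "libs N F = {w. \<forall>i. i \<notin> bit_idx N F \<longrightarrow> w i = False}"

definition valid_prefetch :: "nat \<Rightarrow> nat \<Rightarrow> nat \<Rightarrow> real \<Rightarrow> (nat \<Rightarrow> (nat \<times> nat) set) \<Rightarrow> bool" where
  "valid_prefetch N K F M Mc \<longleftrightarrow>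
     (\<forall>k<K. Mc k \<subseteq> bit_idx N F \<and> real (card (Mc k)) \<le> M * real F)"

definition cached :: "(nat \<times> nat) set \<Rightarrow> ((nat \<times> nat) \<Rightarrow> bool) \<Rightarrow> ((nat \<times> nat) \<Rightarrow> bool)" where
  "cached S w = (\<lambda>i. if i \<in> S then w i else False)"

text \<open>Generalized demands: d k in {0..N} for users k < K (0 = no request).\<close>
definition gen_demands :: "nat \<Rightarrow> nat \<Rightarrow> (nat \<Rightarrow> nat) set" where
  "gen_demands N K = {d. (\<forall>k<K. d k \<le> N) \<and> (\<forall>k\<ge>K. d k = 0)}"

definition err_prob ::
  "nat \<Rightarrow> nat \<Rightarrow> (nat \<times> nat) set \<Rightarrow> nat \<Rightarrow> (((nat \<times> nat) \<Rightarrow> bool) \<Rightarrow> bool list)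
   \<Rightarrow> (bool list \<Rightarrow> ((nat \<times> nat) \<Rightarrow> bool) \<Rightarrow> (nat \<Rightarrow> bool)) \<Rightarrow> real" where
  "err_prob N F S n psi dec =
     real (card {w \<in> libs N F. \<not> (\<forall>j<F. dec (psi w) (cached S w) j = w (n, j))})
     / real (card (libs N F))"

definition achievable ::
  "nat \<Rightarrow> nat \<Rightarrow> nat \<Rightarrow> real \<Rightarrow> (nat \<Rightarrow> nat) \<Rightarrow> (nat \<Rightarrow> (nat \<times> nat) set) \<Rightarrow> nat \<Rightarrow> bool" where
  "achievable N K F eps d Mc L \<longleftrightarrow>
     (\<exists>psi dec. (\<forall>w\<in>libs N F. length (psi w) = L) \<and>
        (\<forall>k<K. d k \<noteq> 0 \<longrightarrow> err_prob N F (Mc k) (d k) psi (dec k) \<le> eps))"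

definition opt_rate_d ::
  "nat \<Rightarrow> nat \<Rightarrow> nat \<Rightarrow> real \<Rightarrow> (nat \<Rightarrow> nat) \<Rightarrow> (nat \<Rightarrow> (nat \<times> nat) set) \<Rightarrow> real" where
  "opt_rate_d N K F eps d Mc = Inf {real L / real F | L. achievable N K F eps d Mc L}"

definition demand_stats :: "nat \<Rightarrow> nat \<Rightarrow> (nat \<Rightarrow> nat) \<Rightarrow> nat list" where
  "demand_stats N K d = rev (sort (map (\<lambda>n. card {k. k < K \<and> d k = n}) [1..<N+1]))"

definition demand_type :: "nat \<Rightarrow> nat \<Rightarrow> nat list \<Rightarrow> (nat \<Rightarrow> nat) set" where
  "demand_type N K s = {d \<in> gen_demands N K. demand_stats N K d = s}"

definition N_e :: "nat list \<Rightarrow> nat" where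
  "N_e s = length (filter (\<lambda>x. x > 0) s)"

definition opt_rate_s ::
  "nat \<Rightarrow> nat \<Rightarrow> nat \<Rightarrow> real \<Rightarrow> nat list \<Rightarrow> (nat \<Rightarrow> (nat \<times> nat) set) \<Rightarrow> real" where
  "opt_rate_s N K F eps s Mc =
     (\<Sum>d\<in>demand_type N K s. opt_rate_d N K F eps d Mc) / real (card (demand_type N K s))"

definition lower_conv_env :: "nat \<Rightarrow> (nat \<Rightarrow> real) \<Rightarrow> real \<Rightarrow> real" where
  "lower_conv_env K f x = Inf {\<Sum>i\<le>K. lam i * f i | lam.
      (\<forall>i\<le>K. lam i \<ge> 0) \<and> (\<Sum>i\<le>K. lam i) = 1 \<and> (\<Sum>i\<le>K. lam i * real i) = x}"

end

theory Submission
  imports Defs "HOL-Combinatorics.Permutations"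
begin


lemma pow_bound_nat: "(x::nat)^2 \<le> 2^(x+2)"
proof (induction x rule: nat_less_induct)
  case (1 n)
  show ?case
  proof (cases "n \<le> 3")
    case True
    then have "n = 0 \<or> n = 1 \<or> n = 2 \<or> n = 3" by auto
    then show ?thesis by auto
  next
    case False
    then obtain m where m: "n = Suc m" "m \<ge> 3" by (cases n) auto
    have "m^2 \<le> 2^(m+2)" using 1 m by auto
    have "(Suc m)^2 \<le> 2 * m^2" using m(2) proof -
      have "m*m \<ge> 3*m" using m(2) by (metis mult_le_mono1 mult.commute)
      then have "Suc (m+m) \<le> m*m" using m(2) by linarith
      then show ?thesis by (simp add: power2_eq_square algebra_simps)
    qed
    then show ?thesis using \<open>m^2 \<le> 2^(m+2)\<close> m(1) by simp
  qed
qed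

lemma pow_bound_real: "real X \<le> 2 powr (1 + real X / 2)"
proof -
  have "(2 powr (1 + real X / 2))^2 = 2 powr (2 * (1 + real X / 2))"
    using powr_power[of "2::real" "1 + real X / 2" 2] by simp
  also have "\<dots> = 2 powr (real (X+2))" by (simp add: algebra_simps)
  also have "\<dots> = 2 ^ (X+2)" by (rule powr_realpow) simp
  also have "\<dots> \<ge> real X ^ 2"
    using pow_bound_nat[of X] by (metis of_nat_le_iff of_nat_numeral of_nat_power)
  finally have "real X ^ 2 \<le> (2 powr (1 + real X / 2))^2" .
  then show ?thesis by (simp add: power_mono_iff abs_le_square_iff)
qed

lemma conv_real:
  fixes L s X :: nat and a :: real
  assumes "s \<le> X" "0 \<le> a" "2^s*(1-a) \<le> 2^L"
  shows "real s - 1 - a * real X \<le> real L"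
proof (rule ccontr)
  assume H: "\<not> ?thesis"
  then have H': "real L + 1 + a*X < s" by simp
  have a1: "a < 1"
  proof (rule ccontr)
    assume "\<not> a < 1" then have "a * X \<ge> X" by (simp add: mult_le_cancel_right1)
    then show False using H' assms(1) by linarith
  qed
  have "(2::real) powr L < 2 powr (real s - 1 - a*X)" using H by simp
  also have "\<dots> = 2 powr s * 2 powr (-1 - a*X)" by (simp add: powr_add[symmetric] algebra_simps)
  finally have "(2::real) ^ L < 2 ^ s * 2 powr (-1 - a*X)"
    by (simp add: powr_realpow)
  then have "2 ^ s * (1-a) < 2 ^ s * 2 powr (-1 - a*X)"
    using assms(3) by linarith
  then have key: "1 - a < 2 powr (-1 - a*X)" by (subst (asm) mult_less_cancel_left_pos) auto
  show False
  proof (cases "a \<le> 1/2")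
    case True
    have "2 powr (-1 - a*X) \<le> 2 powr (-1)" using assms(2) by (intro powr_mono) auto
    then show False using key True by (simp add: powr_minus)
  next
    case False
    have sX: "real s \<le> real X" using assms(1) by simp
    have aX: "0 \<le> a * real X" using assms(2) by simp
    have L0: "0 \<le> real L" by simp
    have "real X > 0" using H' sX aX L0 by linarith
    then have X0: "X > 0" by simp
    have "1 + a*X < X" using H' sX L0 by linarith
    then have "1 < (1-a)*X" by (simp add: algebra_simps)
    then have i1: "1 / real X < 1 - a" using X0 by (simp add: field_simps)
    have "2 powr (-1 - a*X) \<le> 2 powr (-1 - real X/2)"
    proof (rule powr_mono)
      have "(1/2) * real X \<le> a * real X" using False by (intro mult_right_mono) auto
      then show "-1 - a * real X \<le> -1 - real X / 2" by linarith
    qed simp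
    also have "\<dots> = 1 / 2 powr (1 + real X/2)" by (simp add: powr_minus_divide[symmetric] powr_minus)
    also have "\<dots> \<le> 1 / real X" using pow_bound_real[of X] X0 by (intro divide_left_mono) auto
    finally show False using key i1 by linarith
  qed
qed



lemma funs_bij: "bij_betw (\<lambda>g. {i. g i}) {g::'a\<Rightarrow>bool. \<forall>i. i\<notin>B \<longrightarrow> g i = False} (Pow B)"
  by (rule bij_betw_byWitness[where f'="\<lambda>X i. i \<in> X"]) auto

lemma funs_card:
  assumes "finite B"
  shows "card {g::'a\<Rightarrow>bool. \<forall>i. i\<notin>B \<longrightarrow> g i = False} = 2 ^ card B"
    and "finite {g::'a\<Rightarrow>bool. \<forall>i. i\<notin>B \<longrightarrow> g i = False}"
proof -
  show "card {g::'a\<Rightarrow>bool. \<forall>i. i\<notin>B \<longrightarrow> g i = False} = 2 ^ card B"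
    using bij_betw_same_card[OF funs_bij[of B]] assms by (simp add: card_Pow)
  show "finite {g::'a\<Rightarrow>bool. \<forall>i. i\<notin>B \<longrightarrow> g i = False}"
    using bij_betw_finite[OF funs_bij[of B]] assms by simp
qed

lemma finite_bit_idx: "finite (bit_idx N F)" by (simp add: bit_idx_def)
lemma card_bit_idx: "card (bit_idx N F) = N * F" by (simp add: bit_idx_def)

lemma libs_card: "card (libs N F) = 2 ^ (N*F)" "finite (libs N F)"
  using funs_card[OF finite_bit_idx[of N F]] by (simp_all add: libs_def card_bit_idx)

definition cachers :: "nat \<Rightarrow> (nat \<Rightarrow> (nat \<times> nat) set) \<Rightarrow> nat \<times> nat \<Rightarrow> nat set" where
  "cachers K Mc x = {k. k < K \<and> x \<in> Mc k}"

definition cnd :: "(nat \<Rightarrow> nat) \<Rightarrow> nat list \<Rightarrow> nat \<Rightarrow> nat set \<Rightarrow> bool" where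
  "cnd e us f A \<longleftrightarrow> (\<exists>i<length us. e (us!i) = f \<and> (\<forall>m\<le>i. us!m \<notin> A))"

definition Sset :: "nat \<Rightarrow> nat \<Rightarrow> nat \<Rightarrow> (nat \<Rightarrow> (nat \<times> nat) set) \<Rightarrow> (nat \<Rightarrow> nat) \<Rightarrow> nat list \<Rightarrow> (nat \<times> nat) set" where
  "Sset N F K Mc e us = {x \<in> bit_idx N F. cnd e us (fst x) (cachers K Mc x)}"

lemma Sset_card_le: "card (Sset N F K Mc e us) \<le> length us * F"
proof -
  have "Sset N F K Mc e us \<subseteq> (\<lambda>(i,b). (e (us!i), b)) ` ({..<length us} \<times> {..<F})"
  proof
    fix x assume "x \<in> Sset N F K Mc e us"
    then obtain i where "i < length us" "e (us!i) = fst x" "snd x < F"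
      by (auto simp: Sset_def cnd_def bit_idx_def)
    then show "x \<in> (\<lambda>(i,b). (e (us!i), b)) ` ({..<length us} \<times> {..<F})"
      by (intro image_eqI[where x="(i, snd x)"]) auto
  qed
  then have "card (Sset N F K Mc e us) \<le> card ((\<lambda>(i,b). (e (us!i), b)) ` ({..<length us} \<times> {..<F}))"
    by (intro card_mono) auto
  also have "\<dots> \<le> card ({..<length us} \<times> {..<F})" by (rule card_image_le) auto
  finally show ?thesis by simp
qed

lemma libs_out: "w \<in> libs N F \<Longrightarrow> x \<notin> bit_idx N F \<Longrightarrow> w x = False"
  unfolding libs_def by blast

lemma converse_count:
  assumes vp: "valid_prefetch N K F M Mc"
    and us: "set us \<subseteq> {..<K}" "\<forall>u\<in>set us. e u \<noteq> 0"
    and ach: "achievable N K F eps e Mc L" and eps: "eps \<ge> 0"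
  shows "2 ^ card (Sset N F K Mc e us) * (1 - real (length us) * eps) \<le> 2 ^ L"
proof -
  obtain psi dec where len: "\<forall>w\<in>libs N F. length (psi w) = L"
    and err: "\<forall>k<K. e k \<noteq> 0 \<longrightarrow> err_prob N F (Mc k) (e k) psi (dec k) \<le> eps"
    using ach unfolding achievable_def by blast
  define n where "n = length us"
  define T where "T = bit_idx N F"
  define S where "S = Sset N F K Mc e us"
  have ST: "S \<subseteq> T" by (auto simp: S_def T_def Sset_def)
  have fT: "finite T" by (simp add: T_def finite_bit_idx)
  define ok where "ok i w \<longleftrightarrow> (\<forall>j<F. dec (us!i) (psi w) (cached (Mc (us!i)) w) j = w (e (us!i), j))" for i w
  define G where "G = {w \<in> libs N F. \<forall>i<n. ok i w}"
  define Bad where "Bad i = {w \<in> libs N F. \<not> ok i w}" for i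
  have flibs: "finite (libs N F)" and clibs: "card (libs N F) = 2 ^ card T"
    using libs_card[of N F] by (auto simp: T_def card_bit_idx)
  have cpos: "card (libs N F) > 0" using clibs by simp
  have bad_le: "real (card (Bad i)) \<le> eps * real (card (libs N F))" if "i < n" for i
  proof -
    have "us!i \<in> set us" using that n_def by simp
    then have "us!i < K" "e (us!i) \<noteq> 0" using us by auto
    then have "err_prob N F (Mc (us!i)) (e (us!i)) psi (dec (us!i)) \<le> eps" using err by blast
    then have "real (card (Bad i)) / real (card (libs N F)) \<le> eps"
      by (simp add: err_prob_def Bad_def ok_def)
    then show ?thesis using cpos by (simp add: divide_le_eq)
  qed
  have "libs N F - G \<subseteq> (\<Union>i<n. Bad i)" by (auto simp: G_def Bad_def)
  then have "card (libs N F - G) \<le> card (\<Union>i<n. Bad i)"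
    by (intro card_mono) (auto simp: Bad_def flibs)
  also have "\<dots> \<le> (\<Sum>i<n. card (Bad i))" by (rule card_UN_le) simp
  finally have "real (card (libs N F - G)) \<le> (\<Sum>i<n. real (card (Bad i)))"
    by (metis of_nat_le_iff of_nat_sum)
  also have "\<dots> \<le> (\<Sum>i<n. eps * real (card (libs N F)))" by (intro sum_mono bad_le) auto
  finally have cbad: "real (card (libs N F - G)) \<le> real n * eps * real (card (libs N F))" by simp
  have GL: "G \<subseteq> libs N F" by (auto simp: G_def)
  have "card (libs N F - G) = card (libs N F) - card G"
    using GL flibs by (simp add: card_Diff_subset finite_subset)
  moreover have "card G \<le> card (libs N F)" using GL flibs by (simp add: card_mono)
  ultimately have cG: "real (card G) \<ge> (1 - real n * eps) * real (card (libs N F))"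
    using cbad by (simp add: algebra_simps of_nat_diff)
  define h where "h w = (psi w, cached (T - S) w)" for w
  have inj: "inj_on h G"
  proof
    fix w w' assume w: "w \<in> G" and w': "w' \<in> G" and hh: "h w = h w'"
    have wl: "w \<in> libs N F" "w' \<in> libs N F" using w w' by (auto simp: G_def)
    have psieq: "psi w = psi w'" using hh by (simp add: h_def)
    have out: "w x = w' x" if "x \<notin> S" for x
    proof (cases "x \<in> T")
      case True
      have "cached (T - S) w = cached (T - S) w'" using hh by (simp add: h_def)
      then have "cached (T - S) w x = cached (T - S) w' x" by simp
      then show ?thesis using True that by (simp add: cached_def)
    next
      case False then show ?thesis using libs_out[OF wl(1)] libs_out[OF wl(2)] by (simp add: T_def)
    qed
    have claim: "\<forall>m<i. \<forall>j. w (e (us!m), j) = w' (e (us!m), j)" if "i \<le> n" for i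
      using that
    proof (induction i)
      case 0 then show ?case by simp
    next
      case (Suc i)
      then have IH: "\<forall>m<i. \<forall>j. w (e (us!m), j) = w' (e (us!m), j)" and iN: "i < n" by auto
      have uK: "us!i < K" using iN us n_def nth_mem by blast
      have ceq: "cached (Mc (us!i)) w = cached (Mc (us!i)) w'"
      proof
        fix x show "cached (Mc (us!i)) w x = cached (Mc (us!i)) w' x"
        proof (cases "x \<in> Mc (us!i)")
          case False then show ?thesis by (simp add: cached_def)
        next
          case xin: True
          have "w x = w' x"
          proof (cases "x \<in> S")
            case False then show ?thesis using out by blast
          next
            case True
            then obtain i' where i': "i' < n" "e (us!i') = fst x" "\<forall>m\<le>i'. us!m \<notin> cachers K Mc x"
              by (auto simp: S_def Sset_def cnd_def n_def)
            have "us!i \<in> cachers K Mc x" using uK xin by (simp add: cachers_def)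
            then have "i' < i" using i'(3) by (meson not_le)
            then have "w (e (us!i'), snd x) = w' (e (us!i'), snd x)" using IH by blast
            then show ?thesis using i'(2) by (metis prod.collapse)
          qed
          then show ?thesis by (simp add: cached_def)
        qed
      qed
      have okw: "ok i w" "ok i w'" using w w' iN by (auto simp: G_def)
      have "w (e (us!i), j) = w' (e (us!i), j)" for j
      proof (cases "j < F")
        case True
        have "w (e (us!i), j) = dec (us!i) (psi w) (cached (Mc (us!i)) w) j" using okw(1) True by (simp add: ok_def)
        also have "\<dots> = dec (us!i) (psi w') (cached (Mc (us!i)) w') j" using psieq ceq by simp
        also have "\<dots> = w' (e (us!i), j)" using okw(2) True by (simp add: ok_def)
        finally show ?thesis .
      next
        case False
        then have "(e (us!i), j) \<notin> T" by (simp add: T_def bit_idx_def)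
        then show ?thesis using libs_out[OF wl(1)] libs_out[OF wl(2)] by (simp add: T_def)
      qed
      then show ?case using IH less_Suc_eq by auto
    qed
    show "w = w'"
    proof
      fix x show "w x = w' x"
      proof (cases "x \<in> S")
        case False then show ?thesis using out by blast
      next
        case True
        then obtain i' where i': "i' < n" "e (us!i') = fst x"
          by (auto simp: S_def Sset_def cnd_def n_def)
        have "w (e (us!i'), snd x) = w' (e (us!i'), snd x)" using claim[of n] i'(1) by simp
        then show ?thesis using i'(2) by (simp add: prod_eq_iff)
      qed
    qed
  qed
  define LL where "LL = {xs::bool list. set xs \<subseteq> UNIV \<and> length xs = L}"
  define CC where "CC = {g::nat\<times>nat\<Rightarrow>bool. \<forall>i. i \<notin> T - S \<longrightarrow> g i = False}"
  have img: "h ` G \<subseteq> LL \<times> CC"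
    using len by (auto simp: h_def LL_def CC_def G_def cached_def)
  have fLL: "finite LL" and cLL: "card LL = 2 ^ L" unfolding LL_def
    using card_lists_length_eq[of "UNIV::bool set" L] finite_lists_length_eq[of "UNIV::bool set" L]
    by auto
  have fCC: "finite CC" and cCC: "card CC = 2 ^ card (T - S)"
    using funs_card[of "T - S"] fT by (auto simp: CC_def)
  have "card G = card (h ` G)" using inj by (simp add: card_image)
  also have "\<dots> \<le> card (LL \<times> CC)" using img fLL fCC by (intro card_mono) auto
  also have "\<dots> = 2 ^ L * 2 ^ card (T - S)" by (simp add: cLL cCC card_cartesian_product)
  finally have "card G \<le> 2 ^ L * 2 ^ card (T - S)" .
  then have "real (card G) \<le> real (2 ^ L * 2 ^ card (T - S))" by (simp only: of_nat_le_iff)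
  then have cG2: "real (card G) \<le> 2 ^ L * 2 ^ card (T - S)" by simp
  have cTS: "card T = card (T - S) + card S"
  proof -
    have "card (T - S) = card T - card S" using ST fT by (simp add: card_Diff_subset finite_subset)
    moreover have "card S \<le> card T" using ST fT by (simp add: card_mono)
    ultimately show ?thesis by simp
  qed
  have cl2: "real (card (libs N F)) = 2 ^ card (T - S) * 2 ^ card S"
    using clibs cTS by (simp add: power_add)
  have "(1 - real n * eps) * (2 ^ card (T - S) * 2 ^ card S) \<le> 2 ^ L * 2 ^ card (T - S)"
    using cG cG2 unfolding cl2 by linarith
  then have "2 ^ card (T - S) * (2 ^ card S * (1 - real n * eps)) \<le> 2 ^ card (T - S) * 2 ^ L"
    by (simp only: mult_ac)
  then have "2 ^ card S * (1 - real n * eps) \<le> (2::real) ^ L"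
    by (rule mult_left_le_imp_le) simp
  then show ?thesis by (simp add: S_def n_def)
qed



lemma achievable_full:
  assumes "e \<in> gen_demands N K" "eps \<ge> 0"
  shows "achievable N K F eps e Mc (N*F)"
proof -
  define psi where "psi w = map (\<lambda>i. w (i div F + 1, i mod F)) [0..<N*F]" for w :: "nat\<times>nat\<Rightarrow>bool"
  define dec where "dec k (xs::bool list) (c::nat\<times>nat\<Rightarrow>bool) j = xs ! ((e k - 1)*F + j)" for k xs c j
  have ok: "dec k (psi w) c j = w (e k, j)" if "k < K" "e k \<noteq> 0" "j < F" for k w c j
  proof -
    have ek: "e k \<le> N" using assms(1) that(1) by (simp add: gen_demands_def)
    have lt: "(e k - 1)*F + j < N*F"
    proof -
      have "(e k - 1)*F + j < (e k - 1)*F + F" using that(3) by simp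
      also have "\<dots> = e k * F" using that(2) by (cases "e k") auto
      also have "\<dots> \<le> N * F" using ek by simp
      finally show ?thesis .
    qed
    have "((e k - 1)*F + j) div F = e k - 1" "((e k - 1)*F + j) mod F = j" using that(3) by auto
    then show ?thesis using lt that(2) by (simp add: dec_def psi_def)
  qed
  have "err_prob N F (Mc k) (e k) psi (dec k) \<le> eps" if "k < K" "e k \<noteq> 0" for k
  proof -
    have E: "{w \<in> libs N F. \<not> (\<forall>j<F. dec k (psi w) (cached (Mc k) w) j = w (e k, j))} = {}"
      using ok[OF that] by auto
    show ?thesis using assms(2) unfolding err_prob_def E by simp
  qed
  moreover have "\<forall>w\<in>libs N F. length (psi w) = N*F" by (simp add: psi_def)
  ultimately show ?thesis unfolding achievable_def by blast
qed

lemma opt_d_bound: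
  assumes vp: "valid_prefetch N K F M Mc" and e: "e \<in> gen_demands N K"
    and us: "set us \<subseteq> {..<K}" "\<forall>u\<in>set us. e u \<noteq> 0"
    and eps: "eps > 0" and F: "F \<ge> 1"
  shows "(real (card (Sset N F K Mc e us)) - 1) / real F - real (length us)^2 * eps
     \<le> opt_rate_d N K F eps e Mc"
proof -
  let ?A = "{real L / real F | L. achievable N K F eps e Mc L}"
  have "achievable N K F eps e Mc (N*F)" using achievable_full[OF e, of eps F Mc] eps by simp
  then have ne: "?A \<noteq> {}" by blast
  show ?thesis unfolding opt_rate_d_def
  proof (rule cInf_greatest[OF ne])
    fix y assume "y \<in> ?A"
    then obtain L where y: "y = real L / real F" and ach: "achievable N K F eps e Mc L" by blast
    have c: "2 ^ card (Sset N F K Mc e us) * (1 - real (length us) * eps) \<le> 2 ^ L"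
      using converse_count[OF vp us ach] eps by linarith
    have a0: "0 \<le> real (length us) * eps" using eps by simp
    have "real (card (Sset N F K Mc e us)) - 1 - (real (length us) * eps) * real (length us * F) \<le> real L"
      by (rule conv_real[OF Sset_card_le a0 c])
    then have "real (card (Sset N F K Mc e us)) - 1 - real (length us)^2 * eps * real F \<le> real L"
      by (simp add: power2_eq_square algebra_simps)
    then have "(real (card (Sset N F K Mc e us)) - 1 - real (length us)^2 * eps * real F) / real F \<le> real L / real F"
      using F by (intro divide_right_mono) auto
    then show "(real (card (Sset N F K Mc e us)) - 1) / real F - real (length us)^2 * eps \<le> y"
      using F by (simp add: y diff_divide_distrib)
  qed
qed



lemma mset_map_perm:
  assumes "p permutes set xs" "distinct xs"
  shows "mset (map (g \<circ> p) xs) = mset (map g xs)"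
proof -
  have "mset (map p xs) = mset xs"
  proof -
    have "distinct (map p xs)" using assms permutes_inj_on[OF assms(1)]
      by (simp add: distinct_map inj_on_subset)
    moreover have "set (map p xs) = set xs" using permutes_image[OF assms(1)] by simp
    ultimately show ?thesis using set_eq_iff_mset_eq_distinct assms(2) by blast
  qed
  then have "mset (map g (map p xs)) = mset (map g xs)" by (metis mset_map)
  then show ?thesis by simp
qed

lemma perm_fix0:
  assumes "p permutes {1..(N::nat)}"
  shows "p 0 = 0" and "p x = 0 \<longleftrightarrow> x = 0" and "p x \<le> N \<longleftrightarrow> x \<le> N"
proof -
  show p0: "p 0 = 0" using permutes_not_in[OF assms] by simp
  show "p x = 0 \<longleftrightarrow> x = 0" using p0 permutes_inj[OF assms] by (metis injD)
  have "p x \<in> {1..N} \<longleftrightarrow> x \<in> {1..N}" by (rule permutes_in_image[OF assms])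
  then show "p x \<le> N \<longleftrightarrow> x \<le> N" using p0 \<open>p x = 0 \<longleftrightarrow> x = 0\<close>
    by (cases "x = 0") auto
qed

definition Phi :: "(nat \<Rightarrow> nat) \<Rightarrow> (nat \<Rightarrow> nat) \<Rightarrow> (nat \<Rightarrow> nat) \<Rightarrow> (nat \<Rightarrow> nat)" where
  "Phi pm sg e = pm \<circ> e \<circ> inv sg"

lemma Phi_gen:
  assumes pm: "pm permutes {1..N}" and sg: "sg permutes {..<K}" and e: "e \<in> gen_demands N K"
  shows "Phi pm sg e \<in> gen_demands N K"
proof -
  have "Phi pm sg e k \<le> N" if "k < K" for k
  proof -
    have "inv sg k < K" using permutes_in_image[OF permutes_inv[OF sg]] that by simp
    then have "e (inv sg k) \<le> N" using e by (simp add: gen_demands_def)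
    then show ?thesis using perm_fix0(3)[OF pm] by (simp add: Phi_def)
  qed
  moreover have "Phi pm sg e k = 0" if "k \<ge> K" for k
  proof -
    have "inv sg k = k" using permutes_not_in[OF permutes_inv[OF sg]] that by simp
    then show ?thesis using e that perm_fix0(1)[OF pm] by (simp add: Phi_def gen_demands_def)
  qed
  ultimately show ?thesis by (simp add: gen_demands_def)
qed

lemma Phi_stats:
  assumes pm: "pm permutes {1..N}" and sg: "sg permutes {..<K}"
  shows "demand_stats N K (Phi pm sg e) = demand_stats N K e"
proof -
  define g where "g n = card {k. k < K \<and> e k = n}" for n
  have cnt: "card {k. k < K \<and> Phi pm sg e k = n} = g (inv pm n)" for n
  proof -
    have "{k. k < K \<and> Phi pm sg e k = n} = sg ` {k. k < K \<and> e k = inv pm n}"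
    proof (intro set_eqI iffI)
      fix k assume "k \<in> {k. k < K \<and> Phi pm sg e k = n}"
      then have k: "k < K" "pm (e (inv sg k)) = n" by (auto simp: Phi_def)
      have "inv sg k < K" using permutes_in_image[OF permutes_inv[OF sg]] k by simp
      moreover have "e (inv sg k) = inv pm n" using k(2) permutes_inv_eq[OF pm] by metis
      moreover have "k = sg (inv sg k)" using permutes_inverses[OF sg] by simp
      ultimately show "k \<in> sg ` {k. k < K \<and> e k = inv pm n}" by blast
    next
      fix k assume "k \<in> sg ` {k. k < K \<and> e k = inv pm n}"
      then obtain j where j: "j < K" "e j = inv pm n" "k = sg j" by auto
      have "sg j < K" using permutes_in_image[OF sg] j by simp
      moreover have "inv sg k = j" using j(3) permutes_inverses[OF sg] by simp
      moreover have "pm (inv pm n) = n" using permutes_inverses[OF pm] by simp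
      ultimately show "k \<in> {k. k < K \<and> Phi pm sg e k = n}" using j by (simp add: Phi_def)
    qed
    then show ?thesis using permutes_inj_on[OF sg] by (simp add: card_image g_def)
  qed
  have "map (\<lambda>n. card {k. k < K \<and> Phi pm sg e k = n}) [1..<N+1] = map (g \<circ> inv pm) [1..<N+1]"
    using cnt by simp
  moreover have "mset (map (g \<circ> inv pm) [1..<N+1]) = mset (map g [1..<N+1])"
  proof (rule mset_map_perm)
    have "set [1..<Suc N] = {1..N}" by (simp only: set_upt atLeastLessThanSuc_atLeastAtMost)
    then have "set [1..<N+1] = {1..N}" by simp
    then show "inv pm permutes set [1..<N+1]" using permutes_inv[OF pm] by simp
  qed simp
  ultimately have "sort (map (\<lambda>n. card {k. k < K \<and> Phi pm sg e k = n}) [1..<N+1]) = sort (map g [1..<N+1])"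
    by (intro properties_for_sort) (simp_all only: mset_sort sorted_sort)
  moreover have gg: "g = (\<lambda>n. card {k. k < K \<and> e k = n})" using g_def by (intro ext) simp
  ultimately show ?thesis unfolding demand_stats_def by (simp only:)
qed

lemma Phi_type:
  assumes pm: "pm permutes {1..N}" and sg: "sg permutes {..<K}" and e: "e \<in> demand_type N K s"
  shows "Phi pm sg e \<in> demand_type N K s"
  using Phi_gen[OF pm sg] Phi_stats[OF pm sg] e by (auto simp: demand_type_def)

lemma Phi_inj:
  assumes pm: "pm permutes {1..N}" and sg: "sg permutes {..<K}"
  shows "inj (Phi pm sg)"
proof
  fix e e' assume "Phi pm sg e = Phi pm sg e'"
  then have "pm (e (inv sg x)) = pm (e' (inv sg x))" for x unfolding Phi_def comp_def by meson
  then have "e (inv sg x) = e' (inv sg x)" for x using permutes_inj[OF pm] injD by fastforce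
  then have "e (inv sg (sg x)) = e' (inv sg (sg x))" for x by blast
  then show "e = e'" using permutes_inverses(2)[OF sg] by auto
qed



definition Vset :: "nat \<Rightarrow> nat \<Rightarrow> (nat \<Rightarrow> nat) \<Rightarrow> nat list set" where
  "Vset K n e = {us. length us = n \<and> set us \<subseteq> {..<K} \<and> (\<forall>u\<in>set us. e u \<noteq> 0) \<and> distinct (map e us)}"

lemma finite_Vset: "finite (Vset K n e)"
proof (rule finite_subset)
  show "Vset K n e \<subseteq> {us. set us \<subseteq> {..<K} \<and> length us = n}" by (auto simp: Vset_def)
  show "finite {us. set us \<subseteq> {..<K} \<and> length us = n}" by (rule finite_lists_length_eq) simp
qed

lemma finite_gen: "finite (gen_demands N K)"
proof -
  have inj: "inj_on (\<lambda>d. map d [0..<K]) (gen_demands N K)"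
  proof
    fix d d' assume d: "d \<in> gen_demands N K" and d': "d' \<in> gen_demands N K"
      and eq: "map d [0..<K] = map d' [0..<K]"
    show "d = d'"
    proof
      fix k show "d k = d' k"
      proof (cases "k < K")
        case True then show ?thesis using eq by (metis map_eq_conv atLeastLessThan_iff set_upt zero_le)
      next
        case False then show ?thesis using d d' by (simp add: gen_demands_def)
      qed
    qed
  qed
  have "(\<lambda>d. map d [0..<K]) ` gen_demands N K \<subseteq> {xs. set xs \<subseteq> {..N} \<and> length xs = K}"
    by (auto simp: gen_demands_def)
  moreover have "finite {xs. set xs \<subseteq> {..N} \<and> length xs = K}" by (rule finite_lists_length_eq) simp
  ultimately have "finite ((\<lambda>d. map d [0..<K]) ` gen_demands N K)" by (rule finite_subset)
  then show ?thesis using inj by (rule finite_imageD)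
qed

lemma finite_type: "finite (demand_type N K s)"
  by (rule finite_subset[OF _ finite_gen]) (auto simp: demand_type_def)

lemma Phi_apply: "sg permutes S \<Longrightarrow> Phi pm sg e (sg u) = pm (e u)"
  by (simp add: Phi_def permutes_inverses)

lemma Vset_Phi:
  assumes pm: "pm permutes {1..N}" and sg: "sg permutes {..<K}"
  shows "Vset K n (Phi pm sg e) = map sg ` Vset K n e"
proof (intro set_eqI iffI)
  fix us' assume us': "us' \<in> Vset K n (Phi pm sg e)"
  define us where "us = map (inv sg) us'"
  have hback: "map sg us = us'" unfolding us_def map_map
    by (rule map_idI) (simp add: permutes_inverses(1)[OF sg])
  have ph: "Phi pm sg e u = pm (e (inv sg u))" for u by (simp add: Phi_def)
  have "us \<in> Vset K n e" unfolding Vset_def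
  proof (intro CollectI conjI ballI)
    show "length us = n" using us' by (simp add: us_def Vset_def)
    show "set us \<subseteq> {..<K}" using us' permutes_in_image[OF permutes_inv[OF sg]]
      by (auto simp: us_def Vset_def)
    fix u assume "u \<in> set us"
    then obtain u' where "u' \<in> set us'" "u = inv sg u'" by (auto simp: us_def)
    then have "pm (e u) \<noteq> 0" using us' ph by (auto simp: Vset_def)
    then show "e u \<noteq> 0" using perm_fix0(1)[OF pm] by (metis)
  next
    have "map (Phi pm sg e) us' = map pm (map e us)" by (simp add: us_def ph)
    then have "distinct (map pm (map e us))" using us' by (simp add: Vset_def)
    then show "distinct (map e us)" using distinct_map by blast
  qed
  then show "us' \<in> map sg ` Vset K n e" using hback by blast
next
  fix us' assume "us' \<in> map sg ` Vset K n e"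
  then obtain us where us: "us \<in> Vset K n e" and us'd: "us' = map sg us" by blast
  have ap: "Phi pm sg e (sg u) = pm (e u)" for u by (rule Phi_apply[OF sg])
  show "us' \<in> Vset K n (Phi pm sg e)" unfolding Vset_def
  proof (intro CollectI conjI ballI)
    show "length us' = n" using us us'd by (simp add: Vset_def)
    show "set us' \<subseteq> {..<K}" using us us'd permutes_in_image[OF sg] by (auto simp: Vset_def)
    fix u assume "u \<in> set us'"
    then obtain v where "v \<in> set us" "u = sg v" using us'd by auto
    then show "Phi pm sg e u \<noteq> 0" using us ap perm_fix0(2)[OF pm] by (auto simp: Vset_def)
  next
    have "map (Phi pm sg e) us' = map pm (map e us)" by (simp add: us'd ap)
    moreover have "distinct (map pm (map e us))"
    proof -
      have "distinct (map e us)" using us by (simp add: Vset_def)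
      moreover have "inj_on pm (set (map e us))" using permutes_inj_on[OF pm] by blast
      ultimately show ?thesis by (simp only: distinct_map)
    qed
    ultimately show "distinct (map (Phi pm sg e) us')" by simp
  qed
qed

lemma inj_map_sg: "sg permutes S \<Longrightarrow> inj (map sg)"
  using permutes_inj by (blast intro: inj_mapI)

lemma card_Vset_Phi:
  assumes pm: "pm permutes {1..N}" and sg: "sg permutes {..<K}"
  shows "card (Vset K n (Phi pm sg e)) = card (Vset K n e)"
  unfolding Vset_Phi[OF pm sg] by (rule card_image) (rule inj_on_subset[OF inj_map_sg[OF sg]], simp)

lemma cnd_alt: "cnd e us f A \<longleftrightarrow> (\<exists>i<length us. e (us!i) = f \<and> (\<forall>m<length us. m \<le> i \<longrightarrow> us!m \<notin> A))"
  unfolding cnd_def by (auto intro: le_less_trans)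

lemma cnd_Phi:
  assumes pm: "pm permutes {1..N}" and sg: "sg permutes {..<K}"
  shows "cnd (Phi pm sg e) (map sg us) (pm f) (sg ` A) \<longleftrightarrow> cnd e us f A"
proof -
  have ap: "Phi pm sg e (sg u) = pm (e u)" for u by (rule Phi_apply[OF sg])
  have "(pm (e (us!i)) = pm f) \<longleftrightarrow> e (us!i) = f" for i using permutes_inj[OF pm] by (auto dest: injD)
  moreover have "(sg x \<in> sg ` A) \<longleftrightarrow> x \<in> A" for x using permutes_inj[OF sg] by (auto dest: injD)
  ultimately show ?thesis unfolding cnd_alt by (simp add: ap cong: conj_cong)
qed

definition cw :: "nat \<Rightarrow> nat \<Rightarrow> nat list \<Rightarrow> nat \<Rightarrow> nat \<Rightarrow> nat set \<Rightarrow> real" where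
  "cw N K s n f A = (\<Sum>e\<in>demand_type N K s. \<Sum>us\<in>Vset K n e.
      (if cnd e us f A then 1 else 0) / real (card (Vset K n e)))"

lemma Phi_image_type:
  assumes pm: "pm permutes {1..N}" and sg: "sg permutes {..<K}"
  shows "Phi pm sg ` demand_type N K s = demand_type N K s"
proof (rule endo_inj_surj[OF finite_type])
  show "Phi pm sg ` demand_type N K s \<subseteq> demand_type N K s" using Phi_type[OF pm sg] by blast
  show "inj_on (Phi pm sg) (demand_type N K s)" using Phi_inj[OF pm sg] by (rule inj_on_subset) simp
qed

lemma cw_invariant:
  assumes pm: "pm permutes {1..N}" and sg: "sg permutes {..<K}"
  shows "cw N K s n (pm f) (sg ` A) = cw N K s n f A"
proof -
  let ?D = "demand_type N K s"
  let ?G = "\<lambda>e. \<Sum>us\<in>Vset K n e. (if cnd e us (pm f) (sg ` A) then 1 else 0) / real (card (Vset K n e))"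
  have "cw N K s n (pm f) (sg ` A) = sum ?G (Phi pm sg ` ?D)"
    unfolding cw_def Phi_image_type[OF pm sg] ..
  also have "\<dots> = sum (?G \<circ> Phi pm sg) ?D"
    by (rule sum.reindex) (rule inj_on_subset[OF Phi_inj[OF pm sg]], simp)
  also have "\<dots> = (\<Sum>e\<in>?D. \<Sum>us\<in>Vset K n e. (if cnd e us f A then 1 else 0) / real (card (Vset K n e)))"
  proof (rule sum.cong[OF refl])
    fix e
    have "(?G \<circ> Phi pm sg) e = (\<Sum>us\<in>map sg ` Vset K n e.
        (if cnd (Phi pm sg e) us (pm f) (sg ` A) then 1 else 0) / real (card (Vset K n e)))"
      by (simp only: comp_def card_Vset_Phi[OF pm sg]) (simp only: Vset_Phi[OF pm sg])
    also have "\<dots> = (\<Sum>us\<in>Vset K n e.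
        (if cnd (Phi pm sg e) (map sg us) (pm f) (sg ` A) then 1 else 0) / real (card (Vset K n e)))"
      by (subst sum.reindex) (auto intro: inj_on_subset[OF inj_map_sg[OF sg]])
    also have "\<dots> = (\<Sum>us\<in>Vset K n e. (if cnd e us f A then 1 else 0) / real (card (Vset K n e)))"
      by (simp only: cnd_Phi[OF pm sg])
    finally show "(?G \<circ> Phi pm sg) e = (\<Sum>us\<in>Vset K n e. (if cnd e us f A then 1 else 0) / real (card (Vset K n e)))" .
  qed
  also have "\<dots> = cw N K s n f A" by (simp add: cw_def)
  finally show ?thesis .
qed



lemma exists_perm_image:
  assumes "finite S" "A \<subseteq> S" "B \<subseteq> S" "card A = card B"
  shows "\<exists>sg. sg permutes S \<and> sg ` A = B"
proof -
  have fA: "finite A" "finite B" using assms finite_subset by auto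
  obtain h where h: "bij_betw h A B" using finite_same_card_bij[OF fA assms(4)] by blast
  have "card (S - A) = card (S - B)"
    using assms fA by (simp add: card_Diff_subset)
  then obtain h' where h': "bij_betw h' (S - A) (S - B)"
    using finite_same_card_bij assms(1) by blast
  define sg where "sg x = (if x \<in> A then h x else if x \<in> S then h' x else x)" for x
  have b1: "bij_betw sg A B" using h by (rule bij_betw_cong[THEN iffD1, rotated]) (simp add: sg_def)
  have b2: "bij_betw sg (S - A) (S - B)" using h' by (rule bij_betw_cong[THEN iffD1, rotated]) (simp add: sg_def)
  have "bij_betw sg (A \<union> (S - A)) (B \<union> (S - B))" by (rule bij_betw_combine[OF b1 b2]) auto
  moreover have "A \<union> (S - A) = S" "B \<union> (S - B) = S" using assms by auto
  ultimately have "bij_betw sg S S" by simp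
  then have "sg permutes S" by (rule bij_imp_permutes) (use assms(2) in \<open>auto simp: sg_def\<close>)
  moreover have "sg ` A = B" using b1 by (simp add: bij_betw_def)
  ultimately show ?thesis by blast
qed

lemma cw_const:
  assumes "f \<in> {1..N}" "A \<subseteq> {..<K}"
  shows "cw N K s n f A = cw N K s n 1 {..<card A}"
proof -
  have N: "1 \<in> {1..N}" using assms(1) by auto
  let ?pm = "Transposition.transpose 1 f"
  have pm: "?pm permutes {1..N}" by (rule permutes_swap_id[OF N assms(1)])
  have cA: "card A \<le> K" using assms(2) card_mono[of "{..<K}" A] by simp
  obtain sg where sg: "sg permutes {..<K}" "sg ` {..<card A} = A"
    using exists_perm_image[of "{..<K}" "{..<card A}" A] assms(2) cA by auto
  have "cw N K s n (?pm 1) (sg ` {..<card A}) = cw N K s n 1 {..<card A}"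
    by (rule cw_invariant[OF pm sg(1)])
  then show ?thesis using sg(2) by simp
qed

lemma hockey:
  assumes "n \<le> K"
  shows "(\<Sum>i<n. K - Suc i choose j) + (K - n choose Suc j) = K choose Suc j"
  using assms
proof (induction n)
  case 0 then show ?case by simp
next
  case (Suc n)
  have "K - n = Suc (K - Suc n)" using Suc.prems by simp
  then have "K - n choose Suc j = (K - Suc n choose j) + (K - Suc n choose Suc j)" by simp
  then show ?case using Suc by simp
qed

lemma sum_if_card:
  assumes "finite S"
  shows "(\<Sum>x\<in>S. (if P x then 1 else 0)::real) = real (card {x\<in>S. P x})"
  using sum.inter_filter[OF assms, of "\<lambda>_. 1::real" P] by simp

lemma take_mem:
  assumes "i < length us"
  shows "x \<in> set (take (Suc i) us) \<longleftrightarrow> (\<exists>m\<le>i. us!m = x)"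
proof -
  have "x \<in> set (take (Suc i) us) \<longleftrightarrow> (\<exists>m<length (take (Suc i) us). take (Suc i) us ! m = x)"
    by (rule in_set_conv_nth)
  also have "\<dots> \<longleftrightarrow> (\<exists>m<Suc i. us ! m = x)" using assms by auto
  also have "\<dots> \<longleftrightarrow> (\<exists>m\<le>i. us!m = x)" using less_Suc_eq_le by blast
  finally show ?thesis .
qed

definition Asets :: "nat \<Rightarrow> nat \<Rightarrow> nat set set" where
  "Asets K j = {A. A \<subseteq> {..<K} \<and> card A = j}"

lemma finite_Asets: "finite (Asets K j)"
  by (rule finite_subset[of _ "Pow {..<K}"]) (auto simp: Asets_def)

lemma card_Asets: "card (Asets K j) = K choose j"
  using n_subsets[of "{..<K}" j] by (simp add: Asets_def)

lemma count_us:
  assumes e: "e \<in> gen_demands N K" and us: "us \<in> Vset K n e"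
  shows "(\<Sum>f\<in>{1..N}. \<Sum>A\<in>Asets K j. (if cnd e us f A then 1 else 0)::real)
       = real (\<Sum>i<n. K - Suc i choose j)"
proof -
  have len: "length us = n" and uK: "set us \<subseteq> {..<K}" and nz: "\<forall>u\<in>set us. e u \<noteq> 0"
    and dist: "distinct (map e us)" using us by (auto simp: Vset_def)
  have du: "distinct us" using dist by (simp add: distinct_map)
  define I where "I A = {i. i < n \<and> (\<forall>m\<le>i. us!m \<notin> A)}" for A
  have inner: "(\<Sum>f\<in>{1..N}. (if cnd e us f A then 1 else 0)::real) = real (card (I A))" for A
  proof -
    have "{f \<in> {1..N}. cnd e us f A} = (\<lambda>i. e (us!i)) ` I A"
    proof (intro set_eqI iffI)
      fix f assume "f \<in> {f \<in> {1..N}. cnd e us f A}"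
      then show "f \<in> (\<lambda>i. e (us!i)) ` I A" by (auto simp: cnd_def I_def len)
    next
      fix f assume "f \<in> (\<lambda>i. e (us!i)) ` I A"
      then obtain i where i: "i < n" "\<forall>m\<le>i. us!m \<notin> A" "f = e (us!i)" by (auto simp: I_def)
      have "us!i \<in> set us" using i len by simp
      then have "e (us!i) \<noteq> 0" "us!i < K" using nz uK by auto
      then have "e (us!i) \<le> N" using e by (simp add: gen_demands_def)
      then show "f \<in> {f \<in> {1..N}. cnd e us f A}" using i \<open>e (us!i) \<noteq> 0\<close> len
        by (auto simp: cnd_def)
    qed
    moreover have "inj_on (\<lambda>i. e (us!i)) (I A)"
    proof
      fix i i' assume "i \<in> I A" "i' \<in> I A" "e (us!i) = e (us!i')"
      then have "i < length (map e us)" "i' < length (map e us)" "map e us ! i = map e us ! i'"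
        by (auto simp: I_def len)
      then show "i = i'" using dist nth_eq_iff_index_eq by blast
    qed
    ultimately have "card {f \<in> {1..N}. cnd e us f A} = card (I A)" by (simp add: card_image)
    then show ?thesis by (simp add: sum_if_card)
  qed
  have "(\<Sum>f\<in>{1..N}. \<Sum>A\<in>Asets K j. (if cnd e us f A then 1 else 0)::real)
      = (\<Sum>A\<in>Asets K j. \<Sum>f\<in>{1..N}. (if cnd e us f A then 1 else 0)::real)"
    by (rule sum.swap)
  also have "\<dots> = (\<Sum>A\<in>Asets K j. real (card (I A)))" by (rule sum.cong[OF refl]) (rule inner)
  also have "\<dots> = (\<Sum>A\<in>Asets K j. \<Sum>i<n. (if \<forall>m\<le>i. us!m \<notin> A then 1 else 0)::real)"
  proof (rule sum.cong[OF refl])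
    fix A
    have "I A = {i \<in> {..<n}. \<forall>m\<le>i. us!m \<notin> A}" by (auto simp: I_def)
    then show "real (card (I A)) = (\<Sum>i<n. (if \<forall>m\<le>i. us!m \<notin> A then 1 else 0)::real)"
      by (simp add: sum_if_card)
  qed
  also have "\<dots> = (\<Sum>i<n. \<Sum>A\<in>Asets K j. (if \<forall>m\<le>i. us!m \<notin> A then 1 else 0)::real)"
    by (rule sum.swap)
  also have "\<dots> = (\<Sum>i<n. real (K - Suc i choose j))"
  proof (rule sum.cong[OF refl])
    fix i assume i: "i \<in> {..<n}"
    let ?T = "set (take (Suc i) us)"
    have TK: "?T \<subseteq> {..<K}" using uK by (meson set_take_subset subset_trans)
    have cT: "card ?T = Suc i" using i len du by (simp add: distinct_card)
    have "{A \<in> Asets K j. \<forall>m\<le>i. us!m \<notin> A} = {B. B \<subseteq> {..<K} - ?T \<and> card B = j}"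
    proof -
      have "(\<forall>m\<le>i. us!m \<notin> A) \<longleftrightarrow> A \<inter> ?T = {}" for A
        using take_mem[of i us] i len by auto
      then show ?thesis by (auto simp: Asets_def)
    qed
    moreover have "card ({..<K} - ?T) = K - Suc i" using TK cT by (simp add: card_Diff_subset)
    ultimately have "card {A \<in> Asets K j. \<forall>m\<le>i. us!m \<notin> A} = K - Suc i choose j"
      using n_subsets[of "{..<K} - ?T" j] by simp
    then show "(\<Sum>A\<in>Asets K j. (if \<forall>m\<le>i. us!m \<notin> A then 1 else 0)::real) = real (K - Suc i choose j)"
      by (simp add: sum_if_card finite_Asets)
  qed
  also have "\<dots> = real (\<Sum>i<n. K - Suc i choose j)" by simp
  finally show ?thesis .
qed



definition fK :: "nat \<Rightarrow> nat \<Rightarrow> nat \<Rightarrow> real" where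
  "fK K n t = (real (K choose (t + 1)) - real ((K - n) choose (t + 1))) / real (K choose t)"

lemma hockey_real:
  assumes "n \<le> K"
  shows "real (\<Sum>i<n. K - Suc i choose j) = real (K choose (j+1)) - real ((K - n) choose (j+1))"
proof -
  have "real (\<Sum>i<n. K - Suc i choose j) + real (K - n choose Suc j) = real (K choose Suc j)"
    using hockey[OF assms, of j] by (simp only: of_nat_add[symmetric])
  then show ?thesis by simp
qed

lemma cw_value:
  assumes N: "N \<ge> 1" and ne: "\<forall>e\<in>demand_type N K s. Vset K n e \<noteq> {}" and nK: "n \<le> K"
    and jK: "j \<le> K"
  shows "cw N K s n 1 {..<j} = real (card (demand_type N K s)) * fK K n j / real N"
proof -
  let ?D = "demand_type N K s"
  let ?c = "cw N K s n 1 {..<j}"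
  let ?H = "real (\<Sum>i<n. K - Suc i choose j)"
  let ?ind = "\<lambda>e us f A. (if cnd e us f A then 1 else 0)::real"
  have "(\<Sum>f\<in>{1..N}. \<Sum>A\<in>Asets K j. cw N K s n f A) = (\<Sum>f\<in>{1..N}. \<Sum>A\<in>Asets K j. ?c)"
  proof (intro sum.cong refl)
    fix f A assume "f \<in> {1..N}" "A \<in> Asets K j"
    then show "cw N K s n f A = ?c" using cw_const[of f N A K s n] by (auto simp: Asets_def)
  qed
  also have "\<dots> = real N * real (K choose j) * ?c" by (simp add: card_Asets)
  finally have L: "(\<Sum>f\<in>{1..N}. \<Sum>A\<in>Asets K j. cw N K s n f A) = real N * real (K choose j) * ?c" .
  have "(\<Sum>f\<in>{1..N}. \<Sum>A\<in>Asets K j. cw N K s n f A)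
      = (\<Sum>f\<in>{1..N}. \<Sum>A\<in>Asets K j. \<Sum>e\<in>?D. \<Sum>us\<in>Vset K n e. ?ind e us f A / real (card (Vset K n e)))"
    by (simp add: cw_def)
  also have "\<dots> = (\<Sum>f\<in>{1..N}. \<Sum>e\<in>?D. \<Sum>A\<in>Asets K j. \<Sum>us\<in>Vset K n e. ?ind e us f A / real (card (Vset K n e)))"
    by (rule sum.cong[OF refl]) (rule sum.swap)
  also have "\<dots> = (\<Sum>e\<in>?D. \<Sum>f\<in>{1..N}. \<Sum>A\<in>Asets K j. \<Sum>us\<in>Vset K n e. ?ind e us f A / real (card (Vset K n e)))"
    by (rule sum.swap)
  also have "\<dots> = (\<Sum>e\<in>?D. ?H)"
  proof (rule sum.cong[OF refl])
    fix e assume eD: "e \<in> ?D"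
    then have eg: "e \<in> gen_demands N K" by (simp add: demand_type_def)
    have "(\<Sum>f\<in>{1..N}. \<Sum>A\<in>Asets K j. \<Sum>us\<in>Vset K n e. ?ind e us f A / real (card (Vset K n e)))
        = (\<Sum>f\<in>{1..N}. \<Sum>us\<in>Vset K n e. \<Sum>A\<in>Asets K j. ?ind e us f A / real (card (Vset K n e)))"
      by (rule sum.cong[OF refl]) (rule sum.swap)
    also have "\<dots> = (\<Sum>us\<in>Vset K n e. \<Sum>f\<in>{1..N}. \<Sum>A\<in>Asets K j. ?ind e us f A / real (card (Vset K n e)))"
      by (rule sum.swap)
    also have "\<dots> = (\<Sum>us\<in>Vset K n e. ?H / real (card (Vset K n e)))"
    proof (rule sum.cong[OF refl])
      fix us assume us: "us \<in> Vset K n e"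
      have "(\<Sum>f\<in>{1..N}. \<Sum>A\<in>Asets K j. ?ind e us f A / real (card (Vset K n e)))
          = (\<Sum>f\<in>{1..N}. \<Sum>A\<in>Asets K j. ?ind e us f A) / real (card (Vset K n e))"
        by (simp add: sum_divide_distrib)
      also have "\<dots> = ?H / real (card (Vset K n e))" using count_us[OF eg us, of j] by simp
      finally show "(\<Sum>f\<in>{1..N}. \<Sum>A\<in>Asets K j. ?ind e us f A / real (card (Vset K n e)))
          = ?H / real (card (Vset K n e))" .
    qed
    also have "\<dots> = ?H" using ne eD finite_Vset[of K n e] by (simp add: card_gt_0_iff)
    finally show "(\<Sum>f\<in>{1..N}. \<Sum>A\<in>Asets K j. \<Sum>us\<in>Vset K n e. ?ind e us f A / real (card (Vset K n e))) = ?H" .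
  qed
  also have "\<dots> = real (card ?D) * ?H" by simp
  finally have R: "real N * real (K choose j) * ?c = real (card ?D) * ?H" using L by simp
  have pos: "real N * real (K choose j) > 0" using N jK by simp
  have nz: "real N \<noteq> 0" "real (K choose j) \<noteq> 0" using N jK by auto
  have "?c = real (card ?D) * ?H / (real N * real (K choose j))" using R nz by (simp add: field_simps)
  also have "\<dots> = real (card ?D) * (real (K choose (j+1)) - real ((K - n) choose (j+1))) / (real N * real (K choose j))"
    by (simp only: hockey_real[OF nK, of j])
  also have "\<dots> = real (card ?D) * fK K n j / real N"
    by (simp add: fK_def mult.commute)
  finally show ?thesis .
qed

lemma sum_Sset:
  "(\<Sum>e\<in>demand_type N K s. \<Sum>us\<in>Vset K n e. real (card (Sset N F K Mc e us)) / real (card (Vset K n e)))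
   = (\<Sum>x\<in>bit_idx N F. cw N K s n (fst x) (cachers K Mc x))"
proof -
  let ?D = "demand_type N K s"
  have "(\<Sum>e\<in>?D. \<Sum>us\<in>Vset K n e. real (card (Sset N F K Mc e us)) / real (card (Vset K n e)))
      = (\<Sum>e\<in>?D. \<Sum>us\<in>Vset K n e. \<Sum>x\<in>bit_idx N F.
          (if cnd e us (fst x) (cachers K Mc x) then 1 else 0) / real (card (Vset K n e)))"
  proof (intro sum.cong refl)
    fix e us
    have "real (card (Sset N F K Mc e us)) = (\<Sum>x\<in>bit_idx N F. (if cnd e us (fst x) (cachers K Mc x) then 1 else 0))"
      unfolding Sset_def by (rule sum_if_card[symmetric]) (rule finite_bit_idx)
    then show "real (card (Sset N F K Mc e us)) / real (card (Vset K n e)) = (\<Sum>x\<in>bit_idx N F.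
          (if cnd e us (fst x) (cachers K Mc x) then 1 else 0) / real (card (Vset K n e)))"
      by (simp add: sum_divide_distrib)
  qed
  also have "\<dots> = (\<Sum>e\<in>?D. \<Sum>x\<in>bit_idx N F. \<Sum>us\<in>Vset K n e.
          (if cnd e us (fst x) (cachers K Mc x) then 1 else 0) / real (card (Vset K n e)))"
    by (rule sum.cong[OF refl]) (rule sum.swap)
  also have "\<dots> = (\<Sum>x\<in>bit_idx N F. \<Sum>e\<in>?D. \<Sum>us\<in>Vset K n e.
          (if cnd e us (fst x) (cachers K Mc x) then 1 else 0) / real (card (Vset K n e)))"
    by (rule sum.swap)
  also have "\<dots> = (\<Sum>x\<in>bit_idx N F. cw N K s n (fst x) (cachers K Mc x))"
    by (simp add: cw_def)
  finally show ?thesis .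
qed

lemma sum_Sset_value:
  assumes N: "N \<ge> 1" and ne: "\<forall>e\<in>demand_type N K s. Vset K n e \<noteq> {}" and nK: "n \<le> K"
  shows "(\<Sum>e\<in>demand_type N K s. \<Sum>us\<in>Vset K n e. real (card (Sset N F K Mc e us)) / real (card (Vset K n e)))
   = real (card (demand_type N K s)) / real N * (\<Sum>x\<in>bit_idx N F. fK K n (card (cachers K Mc x)))"
proof -
  have "cw N K s n (fst x) (cachers K Mc x) = real (card (demand_type N K s)) / real N * fK K n (card (cachers K Mc x))"
    if "x \<in> bit_idx N F" for x
  proof -
    have f: "fst x \<in> {1..N}" using that by (auto simp: bit_idx_def)
    have A: "cachers K Mc x \<subseteq> {..<K}" by (auto simp: cachers_def)
    have "card (cachers K Mc x) \<le> K" using card_mono[OF _ A] by simp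
    then show ?thesis using cw_const[OF f A] cw_value[OF N ne nK] by simp
  qed
  then show ?thesis unfolding sum_Sset by (simp add: sum_distrib_left)
qed



lemma fK_nonneg: "fK K n t \<ge> 0"
  unfolding fK_def using binomial_right_mono[of "K - n" K "t+1"] by (intro divide_nonneg_nonneg) auto

lemma fK_K: "fK K n K = 0"
  by (simp add: fK_def binomial_eq_0)

lemma Ne_card:
  "N_e (demand_stats N K e) = card {f \<in> {1..N}. \<exists>k<K. e k = f}"
proof -
  define g where "g n = card {k. k < K \<and> e k = n}" for n
  have gpos: "g n > 0 \<longleftrightarrow> (\<exists>k<K. e k = n)" for n
    by (auto simp: g_def card_gt_0_iff)
  have "N_e (demand_stats N K e) = length (filter (\<lambda>x. x > 0) (rev (sort (map g [1..<N+1]))))"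
  proof -
    have gg: "(\<lambda>n. card {k. k < K \<and> e k = n}) = g" by (simp add: g_def fun_eq_iff)
    show ?thesis by (simp only: N_e_def demand_stats_def gg)
  qed
  also have "\<dots> = length (filter (\<lambda>x. x > 0) (map g [1..<N+1]))"
  proof -
    have "mset (filter (\<lambda>x. x > 0) (rev (sort (map g [1..<N+1])))) = mset (filter (\<lambda>x. x > 0) (map g [1..<N+1]))"
      by (simp add: mset_filter)
    then show ?thesis by (metis size_mset)
  qed
  also have "\<dots> = length (filter (\<lambda>n. g n > 0) [1..<N+1])" by (simp add: filter_map comp_def)
  also have "\<dots> = card ({n. g n > 0} \<inter> set [1..<N+1])" by (rule distinct_length_filter) simp
  also have "{n. g n > 0} \<inter> set [1..<N+1] = {f \<in> {1..N}. \<exists>k<K. e k = f}" using gpos by auto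
  finally show ?thesis .
qed

lemma Vset_nonempty:
  assumes e: "e \<in> demand_type N K s"
  shows "Vset K (N_e s) e \<noteq> {}"
proof -
  define R where "R = {f \<in> {1..N}. \<exists>k<K. e k = f}"
  have Ns: "N_e s = card R" using e Ne_card[of N K e] by (simp add: demand_type_def R_def)
  have fR: "finite R" by (simp add: R_def)
  define fs where "fs = sorted_list_of_set R"
  have fs: "set fs = R" "distinct fs" "length fs = card R" using fR by (auto simp: fs_def)
  define pick where "pick f = (SOME k. k < K \<and> e k = f)" for f
  have pk: "pick f < K \<and> e (pick f) = f" if "f \<in> R" for f
  proof -
    have "\<exists>k. k < K \<and> e k = f" using that by (auto simp: R_def)
    from someI_ex[OF this] show ?thesis by (simp add: pick_def)
  qed
  define us where "us = map pick fs"
  have me: "map e us = fs" unfolding us_def map_map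
    by (rule map_idI) (use pk fs(1) in auto)
  have "us \<in> Vset K (N_e s) e" unfolding Vset_def
  proof (intro CollectI conjI ballI)
    show "length us = N_e s" using fs Ns by (simp add: us_def)
    show "set us \<subseteq> {..<K}" using pk fs(1) by (auto simp: us_def)
    show "distinct (map e us)" using me fs by simp
    fix u assume "u \<in> set us"
    then obtain f where "f \<in> R" "u = pick f" using fs(1) by (auto simp: us_def)
    then show "e u \<noteq> 0" using pk by (auto simp: R_def)
  qed
  then show ?thesis by blast
qed

lemma Ne_le_K:
  assumes e: "e \<in> demand_type N K s"
  shows "N_e s \<le> K"
proof -
  obtain us where us: "us \<in> Vset K (N_e s) e" using Vset_nonempty[OF e] by blast
  then have "distinct us" "set us \<subseteq> {..<K}" "length us = N_e s"
    by (auto simp: Vset_def distinct_map)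
  then show ?thesis using card_mono[of "{..<K}" "set us"] distinct_card by fastforce
qed



lemma sum_mix:
  fixes g :: "nat \<Rightarrow> real"
  shows "(\<Sum>i\<le>K. ((1-th) * lam i + (if i = K then th else 0)) * g i)
       = (1-th) * (\<Sum>i\<le>K. lam i * g i) + th * g K"
proof -
  have "(\<Sum>i\<le>K. ((1-th) * lam i + (if i = K then th else 0)) * g i)
      = (\<Sum>i\<le>K. (1-th) * (lam i * g i)) + (\<Sum>i\<le>K. (if i = K then th * g i else 0))"
  proof -
    have "((1-th) * lam i + (if i = K then th else 0)) * g i
        = (1-th) * (lam i * g i) + (if i = K then th * g i else 0)" for i
      by (cases "i = K") (simp_all add: algebra_simps)
    then show ?thesis by (simp only: sum.distrib)
  qed
  also have "(\<Sum>i\<le>K. (if i = K then th * g i else 0)) = th * g K"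
    by (simp add: sum.delta)
  finally show ?thesis by (simp add: sum_distrib_left)
qed

lemma conv_env_le:
  fixes lam :: "nat \<Rightarrow> real" and f :: "nat \<Rightarrow> real"
  assumes lam0: "\<forall>i\<le>K. lam i \<ge> 0" and lam1: "(\<Sum>i\<le>K. lam i) = 1"
    and xle: "(\<Sum>i\<le>K. lam i * real i) \<le> x" and xK: "x \<le> real K"
    and f0: "\<forall>t. f t \<ge> 0" and fK0: "f K = 0"
  shows "lower_conv_env K f x \<le> (\<Sum>i\<le>K. lam i * f i)"
proof -
  define x' where "x' = (\<Sum>i\<le>K. lam i * real i)"
  have x'0: "x' \<ge> 0" unfolding x'_def using lam0 by (intro sum_nonneg) auto
  define th where "th = (if x' < real K then (x - x') / (real K - x') else 0)"
  have th0: "0 \<le> th" and th1: "th \<le> 1" using xle xK by (auto simp: th_def x'_def divide_le_eq_1)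
  define lam' where "lam' i = (1-th) * lam i + (if i = K then th else 0)" for i
  have l0: "\<forall>i\<le>K. lam' i \<ge> 0" using lam0 th0 th1 by (auto simp: lam'_def)
  have l1: "(\<Sum>i\<le>K. lam' i) = 1"
    using sum_mix[of th lam K "\<lambda>_. 1"] lam1 by (simp add: lam'_def)
  have lx: "(\<Sum>i\<le>K. lam' i * real i) = x"
  proof -
    have "(\<Sum>i\<le>K. lam' i * real i) = (1-th) * x' + th * real K"
      using sum_mix[of th lam K real] by (simp add: lam'_def x'_def)
    also have "\<dots> = x"
    proof (cases "x' < real K")
      case True
      then have "th * (real K - x') = x - x'" by (simp add: th_def)
      then show ?thesis by (simp add: algebra_simps)
    next
      case False
      then have "x' = x" using xle xK by (simp add: x'_def)
      then show ?thesis using False by (simp add: th_def)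
    qed
    finally show ?thesis .
  qed
  have lf: "(\<Sum>i\<le>K. lam' i * f i) = (1-th) * (\<Sum>i\<le>K. lam i * f i)"
    using sum_mix[of th lam K f] fK0 by (simp add: lam'_def)
  have pos: "(\<Sum>i\<le>K. lam i * f i) \<ge> 0" using lam0 f0 by (intro sum_nonneg) auto
  have mem: "(\<Sum>i\<le>K. lam' i * f i) \<in> {\<Sum>i\<le>K. lam i * f i | lam.
      (\<forall>i\<le>K. lam i \<ge> 0) \<and> (\<Sum>i\<le>K. lam i) = 1 \<and> (\<Sum>i\<le>K. lam i * real i) = x}"
    using l0 l1 lx by blast
  have bdd: "bdd_below {\<Sum>i\<le>K. lam i * f i | lam.
      (\<forall>i\<le>K. lam i \<ge> 0) \<and> (\<Sum>i\<le>K. lam i) = 1 \<and> (\<Sum>i\<le>K. lam i * real i) = x}"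
  proof (rule bdd_belowI[where m=0])
    fix y assume "y \<in> {\<Sum>i\<le>K. lam i * f i | lam.
      (\<forall>i\<le>K. lam i \<ge> 0) \<and> (\<Sum>i\<le>K. lam i) = 1 \<and> (\<Sum>i\<le>K. lam i * real i) = x}"
    then obtain l where "y = (\<Sum>i\<le>K. l i * f i)" "\<forall>i\<le>K. l i \<ge> 0" by blast
    then show "0 \<le> y" using f0 by (auto intro: sum_nonneg)
  qed
  have "lower_conv_env K f x \<le> (\<Sum>i\<le>K. lam' i * f i)"
    unfolding lower_conv_env_def by (rule cInf_lower[OF mem bdd])
  also have "\<dots> \<le> (\<Sum>i\<le>K. lam i * f i)"
  proof -
    have "th * (\<Sum>i\<le>K. lam i * f i) \<ge> 0" using pos th0 by simp
    then show ?thesis using lf by (simp add: algebra_simps)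
  qed
  finally show ?thesis .
qed



lemma cachers_le: "card (cachers K Mc x) \<le> K"
  using card_mono[of "{..<K}" "cachers K Mc x"] by (auto simp: cachers_def)

lemma sum_cachers:
  assumes vp: "valid_prefetch N K F M Mc"
  shows "(\<Sum>x\<in>bit_idx N F. real (card (cachers K Mc x))) \<le> real K * M * real F"
proof -
  let ?T = "bit_idx N F"
  have "(\<Sum>x\<in>?T. real (card (cachers K Mc x))) = (\<Sum>x\<in>?T. \<Sum>k\<in>{..<K}. (if x \<in> Mc k then 1 else 0)::real)"
  proof (rule sum.cong[OF refl])
    fix x
    have "cachers K Mc x = {k \<in> {..<K}. x \<in> Mc k}" by (auto simp: cachers_def)
    then show "real (card (cachers K Mc x)) = (\<Sum>k\<in>{..<K}. (if x \<in> Mc k then 1 else 0)::real)"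
      by (simp add: sum_if_card)
  qed
  also have "\<dots> = (\<Sum>k\<in>{..<K}. \<Sum>x\<in>?T. (if x \<in> Mc k then 1 else 0)::real)" by (rule sum.swap)
  also have "\<dots> = (\<Sum>k\<in>{..<K}. real (card (Mc k)))"
  proof (rule sum.cong[OF refl])
    fix k assume "k \<in> {..<K}"
    then have "Mc k \<subseteq> ?T" using vp by (simp add: valid_prefetch_def)
    then have "{x \<in> ?T. x \<in> Mc k} = Mc k" by auto
    then show "(\<Sum>x\<in>?T. (if x \<in> Mc k then 1 else 0)::real) = real (card (Mc k))"
      using sum_if_card[OF finite_bit_idx, of "\<lambda>x. x \<in> Mc k"] by simp
  qed
  also have "\<dots> \<le> (\<Sum>k\<in>{..<K}. M * real F)"
    by (rule sum_mono) (use vp in \<open>simp add: valid_prefetch_def\<close>)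
  also have "\<dots> = real K * M * real F" by simp
  finally show ?thesis .
qed

lemma sum_group_card:
  fixes h :: "nat \<Rightarrow> real"
  assumes "finite T" "\<forall>x\<in>T. g x \<le> K"
  shows "(\<Sum>i\<le>K. real (card {x\<in>T. g x = i}) * h i) = (\<Sum>x\<in>T. h (g x))"
proof -
  have "(\<Sum>i\<le>K. real (card {x\<in>T. g x = i}) * h i) = (\<Sum>i\<le>K. \<Sum>x\<in>{x. x \<in> T \<and> g x = i}. h (g x))"
  proof (rule sum.cong[OF refl])
    fix i
    have "(\<Sum>x\<in>{x. x \<in> T \<and> g x = i}. h (g x)) = (\<Sum>x\<in>{x. x \<in> T \<and> g x = i}. h i)"
      by (rule sum.cong) auto
    then show "real (card {x\<in>T. g x = i}) * h i = (\<Sum>x\<in>{x. x \<in> T \<and> g x = i}. h (g x))" by simp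
  qed
  also have "\<dots> = (\<Sum>x\<in>T. h (g x))"
    by (rule sum.group) (use assms in auto)
  finally show ?thesis .
qed

lemma conv_bits:
  assumes vp: "valid_prefetch N K F M Mc" and N: "N \<ge> 1" and F: "F \<ge> 1" and MN: "M \<le> real N"
  shows "lower_conv_env K (fK K n) (real K * M / real N)
     \<le> (\<Sum>x\<in>bit_idx N F. fK K n (card (cachers K Mc x))) / (real N * real F)"
proof -
  let ?T = "bit_idx N F"
  let ?g = "\<lambda>x. card (cachers K Mc x)"
  define NF where "NF = real N * real F"
  have NF0: "NF > 0" using N F by (simp add: NF_def)
  have cT: "real (card ?T) = NF" by (simp add: card_bit_idx NF_def)
  define lam where "lam i = real (card {x\<in>?T. ?g x = i}) / NF" for i
  have gK: "\<forall>x\<in>?T. ?g x \<le> K" using cachers_le by blast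
  have G: "(\<Sum>i\<le>K. lam i * h i) = (\<Sum>x\<in>?T. h (?g x)) / NF" for h
  proof -
    have "(\<Sum>i\<le>K. lam i * h i) = (\<Sum>i\<le>K. real (card {x\<in>?T. ?g x = i}) * h i) / NF"
      by (simp add: lam_def sum_divide_distrib)
    also have "\<dots> = (\<Sum>x\<in>?T. h (?g x)) / NF" by (simp only: sum_group_card[OF finite_bit_idx gK])
    finally show ?thesis .
  qed
  have l0: "\<forall>i\<le>K. lam i \<ge> 0" using NF0 by (simp add: lam_def)
  have l1: "(\<Sum>i\<le>K. lam i) = 1" using G[of "\<lambda>_. 1"] cT NF0 by simp
  have lx: "(\<Sum>i\<le>K. lam i * real i) \<le> real K * M / real N"
  proof -
    have "(\<Sum>i\<le>K. lam i * real i) = (\<Sum>x\<in>?T. real (?g x)) / NF" using G[of real] by simp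
    also have "\<dots> \<le> (real K * M * real F) / NF"
      using sum_cachers[OF vp] NF0 by (intro divide_right_mono) auto
    also have "\<dots> = real K * M / real N" using F by (simp add: NF_def)
    finally show ?thesis .
  qed
  have xK: "real K * M / real N \<le> real K" using MN N
    by (simp add: divide_le_eq mult_left_mono)
  have "lower_conv_env K (fK K n) (real K * M / real N) \<le> (\<Sum>i\<le>K. lam i * fK K n i)"
    by (rule conv_env_le[OF l0 l1 lx xK]) (auto simp: fK_nonneg fK_K)
  also have "\<dots> = (\<Sum>x\<in>?T. fK K n (?g x)) / NF" by (rule G)
  finally show ?thesis by (simp add: NF_def)
qed



theorem lemma4:
  fixes N K F :: nat and M eps :: real and s :: "nat list"
    and Mc :: "nat \<Rightarrow> (nat \<times> nat) set"
  assumes "N \<ge> 1" and "K \<ge> 1" and "F \<ge> 1"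
    and "0 \<le> M" and "M \<le> real N"
    and "eps > 0"
    and "s \<in> demand_stats N K ` gen_demands N K"
    and "valid_prefetch N K F M Mc"
  shows "opt_rate_s N K F eps s Mc \<ge>
     lower_conv_env K
        (\<lambda>t. (real (K choose (t + 1)) - real ((K - N_e s) choose (t + 1))) / real (K choose t))
        (real K * M / real N)
     - (1 / real F + real (N_e s) ^ 2 * eps)"
proof -
  note N = assms(1) and F = assms(3) and MN = assms(5) and eps = assms(6) and vp = assms(8)
  define n where "n = N_e s"
  define D where "D = demand_type N K s"
  define q where "q e = real (card (Vset K n e))" for e
  define loss where "loss = 1 / real F + real n ^ 2 * eps"
  obtain e0 where "e0 \<in> gen_demands N K" "s = demand_stats N K e0" using assms(7) by blast
  then have e0: "e0 \<in> D" by (simp add: D_def demand_type_def)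
  have fD: "finite D" by (simp add: D_def finite_type)
  have cD: "real (card D) > 0" using fD e0 by (auto simp: card_gt_0_iff)
  have ne: "\<forall>e\<in>D. Vset K n e \<noteq> {}" using Vset_nonempty by (simp add: D_def n_def)
  have nK: "n \<le> K" using Ne_le_K[OF e0[unfolded D_def]] by (simp add: n_def)
  have qpos: "q e > 0" if "e \<in> D" for e
    using ne that finite_Vset[of K n e] by (auto simp: q_def card_gt_0_iff)
  have per_e: "opt_rate_d N K F eps e Mc \<ge>
      (\<Sum>us\<in>Vset K n e. real (card (Sset N F K Mc e us)) / q e) / real F - loss" if eD: "e \<in> D" for e
  proof -
    have eg: "e \<in> gen_demands N K" using eD by (simp add: D_def demand_type_def)
    have one: "(\<Sum>us\<in>Vset K n e. 1 / q e) = 1" using qpos[OF eD] by (simp add: q_def)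
    have "(\<Sum>us\<in>Vset K n e. ((real (card (Sset N F K Mc e us)) - 1) / real F - real n ^ 2 * eps) / q e)
        \<le> (\<Sum>us\<in>Vset K n e. opt_rate_d N K F eps e Mc / q e)"
    proof (rule sum_mono)
      fix us assume us: "us \<in> Vset K n e"
      have "set us \<subseteq> {..<K}" "\<forall>u\<in>set us. e u \<noteq> 0" "length us = n" using us by (auto simp: Vset_def)
      then have "(real (card (Sset N F K Mc e us)) - 1) / real F - real n ^ 2 * eps \<le> opt_rate_d N K F eps e Mc"
        using opt_d_bound[OF vp eg _ _ eps F] by auto
      then show "((real (card (Sset N F K Mc e us)) - 1) / real F - real n ^ 2 * eps) / q e
          \<le> opt_rate_d N K F eps e Mc / q e" using qpos[OF eD] by (simp add: divide_right_mono)
    qed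
    also have "\<dots> = opt_rate_d N K F eps e Mc" using one by (simp add: sum_divide_distrib[symmetric])
    finally have A: "(\<Sum>us\<in>Vset K n e. ((real (card (Sset N F K Mc e us)) - 1) / real F - real n ^ 2 * eps) / q e)
        \<le> opt_rate_d N K F eps e Mc" .
    have "(\<Sum>us\<in>Vset K n e. ((real (card (Sset N F K Mc e us)) - 1) / real F - real n ^ 2 * eps) / q e)
        = (\<Sum>us\<in>Vset K n e. (real (card (Sset N F K Mc e us)) / q e) / real F - loss * (1 / q e))"
    proof (rule sum.cong[OF refl])
      fix us
      have q0: "q e \<noteq> 0" using qpos[OF eD] by simp
      have F0: "real F \<noteq> 0" using F by simp
      show "((real (card (Sset N F K Mc e us)) - 1) / real F - real n ^ 2 * eps) / q e
        = (real (card (Sset N F K Mc e us)) / q e) / real F - loss * (1 / q e)"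
        using q0 F0 by (simp add: loss_def field_simps)
    qed
    also have "\<dots> = (\<Sum>us\<in>Vset K n e. real (card (Sset N F K Mc e us)) / q e) / real F - loss"
      using one by (simp add: sum_subtractf sum_divide_distrib[symmetric] sum_distrib_left[symmetric])
    finally show ?thesis using A by simp
  qed
  have "(\<Sum>e\<in>D. opt_rate_d N K F eps e Mc) \<ge>
      (\<Sum>e\<in>D. (\<Sum>us\<in>Vset K n e. real (card (Sset N F K Mc e us)) / q e) / real F - loss)"
    by (rule sum_mono) (rule per_e)
  moreover have "(\<Sum>e\<in>D. (\<Sum>us\<in>Vset K n e. real (card (Sset N F K Mc e us)) / q e) / real F - loss)
      = (\<Sum>e\<in>D. \<Sum>us\<in>Vset K n e. real (card (Sset N F K Mc e us)) / q e) / real F - real (card D) * loss"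
    by (simp only: sum_subtractf sum_divide_distrib[of _ D "real F"] sum_constant)
  moreover have "(\<Sum>e\<in>D. \<Sum>us\<in>Vset K n e. real (card (Sset N F K Mc e us)) / q e)
      = real (card D) / real N * (\<Sum>x\<in>bit_idx N F. fK K n (card (cachers K Mc x)))"
    unfolding q_def D_def using sum_Sset_value[OF N ne[unfolded D_def] nK] .
  ultimately have B: "(\<Sum>e\<in>D. opt_rate_d N K F eps e Mc) \<ge>
      real (card D) / real N * (\<Sum>x\<in>bit_idx N F. fK K n (card (cachers K Mc x))) / real F - real (card D) * loss"
    by simp
  have "opt_rate_s N K F eps s Mc = (\<Sum>e\<in>D. opt_rate_d N K F eps e Mc) / real (card D)"
    by (simp add: opt_rate_s_def D_def)
  also have "\<dots> \<ge> (real (card D) / real N * (\<Sum>x\<in>bit_idx N F. fK K n (card (cachers K Mc x))) / real F - real (card D) * loss) / real (card D)"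
    using B cD by (simp add: divide_right_mono)
  also have "(real (card D) / real N * (\<Sum>x\<in>bit_idx N F. fK K n (card (cachers K Mc x))) / real F - real (card D) * loss) / real (card D)
      = (\<Sum>x\<in>bit_idx N F. fK K n (card (cachers K Mc x))) / (real N * real F) - loss"
  proof -
    have "real (card D) \<noteq> 0" "real N \<noteq> 0" "real F \<noteq> 0" using cD N F by auto
    then show ?thesis by (simp add: field_simps)
  qed
  finally have C: "opt_rate_s N K F eps s Mc \<ge>
      (\<Sum>x\<in>bit_idx N F. fK K n (card (cachers K Mc x))) / (real N * real F) - loss" .
  have fKeq: "(\<lambda>t. (real (K choose (t + 1)) - real ((K - N_e s) choose (t + 1))) / real (K choose t)) = fK K n"
    by (simp add: fK_def n_def fun_eq_iff)
  have "lower_conv_env K (fK K n) (real K * M / real N)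
     \<le> (\<Sum>x\<in>bit_idx N F. fK K n (card (cachers K Mc x))) / (real N * real F)"
    by (rule conv_bits[OF vp N F MN])
  then show ?thesis using C unfolding fKeq by (simp add: loss_def n_def)
qed


end
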